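(* Let $q$ be a prime power and let $s,t,n,k$ be nonnegative integers with $t$ even and $n=2k$. Let $\beta\in\mathbb{F}_{q^k}$, $\gamma\in\mathbb{F}_q^*$, and $\delta\in\mathbb{F}_{q^n}$ with $\delta^{q^k}=-\delta$. Then $$f(x)=(x^{q^k}-x+\delta)^t+\beta\,\mathrm{Tr}(x)+\gamma x^{q^s}$$ is a permutation polynomial of $\mathbb{F}_{q^n}$ if and only if $\mathrm{Tr}(\beta\gamma^{-1})+1\neq0$.
   Context: $\mathrm{Tr}$ denotes the trace function from $\mathbb{F}_{q^n}$ to $\mathbb{F}_q$, $\mathrm{Tr}(x)=x+x^q+\cdots+x^{q^{n-1}}$. A permutation polynomial of $\mathbb{F}_{q^n}$ is one inducing a bijection of $\mathbb{F}_{q^n}$. *)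

theory Defs
  imports "HOL-Computational_Algebra.Primes"
begin

text \<open>Trace from F_{q^n} to F_q, where F_{q^n} is the whole (finite) field type.\<close>
definition trace :: "nat \<Rightarrow> nat \<Rightarrow> 'a::field \<Rightarrow> 'a" where
  "trace q n x = (\<Sum>i<n. x ^ (q ^ i))"

definition subfield_elems :: "nat \<Rightarrow> nat \<Rightarrow> 'a::field set" where
  "subfield_elems q m = {x. x ^ (q ^ m) = x}"

definition prime_power :: "nat \<Rightarrow> bool" where
  "prime_power q \<longleftrightarrow> (\<exists>p m. prime p \<and> m > 0 \<and> q = p ^ m)"

end

theory Submission
  imports Defs "HOL-Number_Theory.Residues"
begin

lemma fin_field_pow_card:
  fixes x :: "'a :: {field,finite}"
  shows "x ^ card (UNIV :: 'a set) = x"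
proof (cases "x = 0")
  case False
  have "x * (\<Prod>y\<in>UNIV-{0}. x * y) = x * x ^ (card (UNIV :: 'a set) - 1) * \<Prod>(UNIV-{0})"
    by (simp add: prod.distrib mult_ac)
  also have "x * x ^ (card (UNIV :: 'a set) - 1) = x ^ Suc (card (UNIV :: 'a set) - 1)"
    by (subst power_Suc) auto
  also have "Suc (card (UNIV :: 'a set) - 1) = card (UNIV :: 'a set)"
    using finite_UNIV_card_ge_0[where ?'a = 'a] by simp
  also have "(\<Prod>y\<in>UNIV-{0}. x * y) = (\<Prod>y\<in>UNIV-{0}. y)"
    by (rule prod.reindex_bij_witness[of _ "\<lambda>y. y / x" "\<lambda>y. x * y"]) (use False in auto)
  finally show ?thesis
    by simp
qed (use finite_UNIV_card_ge_0[where ?'a = 'a] in auto)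

locale frobq =
  fixes q n :: nat and dummy :: "'a::field itself"
  assumes q1: "q > 1"
    and fadd: "\<And>x y::'a. (x+y)^q = x^q + y^q"
    and fid: "\<And>x::'a. x^(q^n) = x"
    and npos: "n > 0"
begin

lemma addj: "((x::'a)+y)^(q^j) = x^(q^j) + y^(q^j)"
proof (induction j arbitrary: x y)
  case (Suc j)
  have "(x+y)^(q^Suc j) = ((x+y)^q)^(q^j)" by (simp add: power_mult mult.commute)
  also have "\<dots> = (x^q)^(q^j) + (y^q)^(q^j)" by (simp add: fadd Suc)
  finally show ?case by (simp add: power_mult[symmetric] mult.commute)
qed simp

lemma zeroj: "(0::'a)^(q^j) = 0"
  using q1 by simp

lemma negj: "(-(x::'a))^(q^j) = - (x^(q^j))"
proof -
  have "(x + -x)^(q^j) = x^(q^j) + (-x)^(q^j)" by (rule addj)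
  then show ?thesis using zeroj[of j] by (simp add: eq_neg_iff_add_eq_0 add.commute)
qed

lemma diffj: "((x::'a)-y)^(q^j) = x^(q^j) - y^(q^j)"
  using addj[of x "-y" j] negj[of y j] by simp

lemma sumj: "(\<Sum>i\<in>A. (f i::'a))^(q^j) = (\<Sum>i\<in>A. f i ^ (q^j))"
  by (induction A rule: infinite_finite_induct) (auto simp: zeroj addj)

lemma fixj: "(x::'a)^q = x \<Longrightarrow> x^(q^j) = x"
  by (induction j) (simp_all add: power_mult mult.commute)

lemma fixQj: "(x::'a)^(q^k) = x \<Longrightarrow> x^((q^k)^j) = x"
  by (induction j) (simp_all add: power_mult mult.commute)

lemma powpow: "((x::'a)^(q^a))^(q^b) = x^(q^(a+b))"
  by (simp add: power_mult power_add)

lemma tr_shift: "(\<Sum>i<n. (x::'a)^(q^Suc i)) = (\<Sum>i<n. x^(q^i))"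
proof -
  have "(\<Sum>i<Suc n. x^(q^i)) = x^(q^0) + (\<Sum>i<n. x^(q^Suc i))"
    by (rule sum.lessThan_Suc_shift)
  moreover have "(\<Sum>i<Suc n. x^(q^i)) = (\<Sum>i<n. x^(q^i)) + x^(q^n)"
    by simp
  ultimately show ?thesis using fid[of x] by simp
qed

lemma tr_q: "trace q n (x::'a) ^ q = trace q n x"
proof -
  have "trace q n x ^ q = trace q n x ^ (q^1)" by simp
  also have "\<dots> = (\<Sum>i<n. x^(q^Suc i))"
    unfolding trace_def sumj powpow by simp
  finally show ?thesis using tr_shift unfolding trace_def by simp
qed

lemma tr_frob: "trace q n ((x::'a)^q) = trace q n x"
proof -
  have "trace q n (x^q) = (\<Sum>i<n. x^(q^Suc i))"
    unfolding trace_def by (simp add: power_mult[symmetric] mult.commute)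
  then show ?thesis using tr_shift unfolding trace_def by simp
qed

lemma tr_frobj: "trace q n ((x::'a)^(q^j)) = trace q n x"
proof (induction j)
  case (Suc j)
  have "x^(q^Suc j) = (x^(q^j))^q" by (simp add: power_mult[symmetric] mult.commute)
  then show ?case using tr_frob Suc by simp
qed simp

lemma tr_add: "trace q n ((x::'a) + y) = trace q n x + trace q n y"
  unfolding trace_def addj by (simp add: sum.distrib)

lemma tr_neg: "trace q n (-(x::'a)) = - trace q n x"
  unfolding trace_def negj by (simp add: sum_negf)

lemma tr_scal: "(T::'a)^q = T \<Longrightarrow> trace q n (T*x) = T * trace q n x"
  unfolding trace_def by (simp add: power_mult_distrib fixj sum_distrib_left)

lemma powj_inj: "(x::'a)^(q^j) = y^(q^j) \<Longrightarrow> x = y"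
proof -
  assume "x^(q^j) = y^(q^j)"
  then have "(x-y)^(q^j) = 0" by (simp add: diffj)
  then show "x = y" by simp
qed

end

theorem mainTheorem4:
  fixes q s t n k :: nat
    and \<beta> \<gamma> \<delta> :: "'a::{field,finite}"
  assumes "prime_power q"
    and "card (UNIV :: 'a set) = q ^ n"
    and "even t"
    and "n = 2 * k"
    and "\<beta> \<in> subfield_elems q k"
    and "\<gamma> \<in> subfield_elems q 1" and "\<gamma> \<noteq> 0"
    and "\<delta> ^ (q ^ k) = - \<delta>"
  shows "bij (\<lambda>x::'a. (x ^ (q ^ k) - x + \<delta>) ^ t + \<beta> * trace q n x + \<gamma> * x ^ (q ^ s))
         \<longleftrightarrow> trace q n (\<beta> * inverse \<gamma>) + 1 \<noteq> 0"
proof -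
  obtain p m where pm: "prime p" "m > 0" "q = p ^ m" using assms(1) unfolding prime_power_def by blast
  have fin: "finite (UNIV :: 'a set)" by simp
  have cpos: "CHAR('a) > 0" by (rule finite_imp_CHAR_pos[OF fin])
  have cpr: "prime CHAR('a)" by (rule prime_CHAR_semidom[OF cpos])
  have npos: "n > 0"
  proof (rule ccontr)
    assume "\<not> n > 0"
    then have "card (UNIV :: 'a set) = 1" using assms(2) by simp
    then obtain z where "(UNIV :: 'a set) = {z}" using card_1_singletonE by blast
    then show False by (metis UNIV_I singletonD zero_neq_one)
  qed
  have "CHAR('a) dvd p ^ (m * n)" using CHAR_dvd_CARD[where 'a='a] assms(2) pm(3)
    by (simp add: power_mult)
  then have "CHAR('a) dvd p" using cpr prime_dvd_power by blast
  then have cp: "CHAR('a) = p" using cpr pm(1) primes_dvd_imp_eq by blast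
  have q1: "q > 1" using pm prime_gt_1_nat
    by (metis One_nat_def less_one nat_neq_iff one_less_power)
  have fadd: "\<And>x y::'a. (x+y)^q = x^q + y^q"
    using freshmans_dream'[OF cpr, of q m] pm(3) cp by simp
  have fid: "\<And>x::'a. x^(q^n) = x" using fin_field_pow_card assms(2) by metis
  interpret F: frobq q n "TYPE('a)"
    by unfold_locales (use q1 fadd fid npos in auto)
  define Q where "Q = q^k"
  have QQ: "q^n = Q*Q" unfolding Q_def assms(4) by (simp add: power_mult mult_2 power_add)
  let ?f = "\<lambda>x::'a. (x ^ (q ^ k) - x + \<delta>) ^ t + \<beta> * trace q n x + \<gamma> * x ^ (q ^ s)"
  have bQ: "\<beta>^Q = \<beta>" using assms(5) unfolding subfield_elems_def Q_def by simp
  have gq: "\<gamma>^q = \<gamma>" using assms(6) unfolding subfield_elems_def by simp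
  have gQ: "\<gamma>^Q = \<gamma>" unfolding Q_def by (rule F.fixj[OF gq])
  have trQ: "trace q n x ^ Q = trace q n x" for x :: 'a
    unfolding Q_def by (rule F.fixj[OF F.tr_q])
  have xQQ: "(x^Q)^Q = x" for x :: 'a using fid[of x] QQ by (simp add: power_mult)
  have dQ: "\<delta>^Q = -\<delta>" using assms(8) Q_def by simp
  have yQ: "(x^Q - x + \<delta>)^Q = - (x^Q - x + \<delta>)" for x :: 'a
    unfolding Q_def using xQQ[of x] dQ F.addj F.diffj Q_def by simp
  have ytQ: "((x^Q - x + \<delta>)^t)^Q = (x^Q - x + \<delta>)^t" for x :: 'a
  proof -
    have "((x^Q - x + \<delta>)^t)^Q = ((x^Q - x + \<delta>)^Q)^t" by (simp add: power_mult[symmetric] mult.commute)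
    also have "\<dots> = (- (x^Q - x + \<delta>))^t" using yQ[of x] by simp
    also have "\<dots> = (x^Q - x + \<delta>)^t" using assms(3) by (rule power_minus_even)
    finally show ?thesis .
  qed
  have fQ: "(?f x)^Q - ?f x = \<gamma> * (x^Q - x)^(q^s)" for x :: 'a
  proof -
    have "(?f x)^Q = (x^Q - x + \<delta>)^t + \<beta> * trace q n x + \<gamma> * (x^Q)^(q^s)"
      unfolding Q_def[symmetric] using ytQ[of x] bQ gQ trQ[of x]
      unfolding Q_def by (simp add: F.addj power_mult_distrib F.powpow add.commute)
    then show ?thesis unfolding Q_def[symmetric] by (simp add: F.diffj algebra_simps)
  qed
  have crit: "bij ?f \<longleftrightarrow> (\<forall>c::'a. c^Q = c \<and> \<beta> * trace q n c + \<gamma> * c^(q^s) = 0 \<longrightarrow> c = 0)"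
  proof
    assume b: "bij ?f"
    show "\<forall>c::'a. c^Q = c \<and> \<beta> * trace q n c + \<gamma> * c^(q^s) = 0 \<longrightarrow> c = 0"
    proof (intro allI impI)
      fix c :: 'a assume c: "c^Q = c \<and> \<beta> * trace q n c + \<gamma> * c^(q^s) = 0"
      have "?f c = ?f 0"
        using c unfolding Q_def by (simp add: trace_def F.zeroj)
      then show "c = 0" using b unfolding bij_def inj_def by blast
    qed
  next
    assume h: "\<forall>c::'a. c^Q = c \<and> \<beta> * trace q n c + \<gamma> * c^(q^s) = 0 \<longrightarrow> c = 0"
    have "inj ?f"
    proof (rule injI)
      fix x x' :: 'a assume e: "?f x = ?f x'"
      have "\<gamma> * (x^Q - x)^(q^s) = \<gamma> * (x'^Q - x')^(q^s)" proof -
        have "\<gamma> * (x^Q - x)^(q^s) = (?f x)^Q - ?f x" using fQ[of x] by simp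
        also have "\<dots> = (?f x')^Q - ?f x'" using e by simp
        also have "\<dots> = \<gamma> * (x'^Q - x')^(q^s)" using fQ[of x'] by simp
        finally show ?thesis .
      qed
      then have "x^Q - x = x'^Q - x'" using assms(7) F.powj_inj by simp
      then have cQ: "(x' - x)^Q = x' - x" unfolding Q_def by (simp add: F.diffj algebra_simps)
      have "x^(q^k) - x = x'^(q^k) - x'" using \<open>x^Q - x = x'^Q - x'\<close> Q_def by simp
      then have "\<beta> * trace q n x + \<gamma> * x ^ (q ^ s) = \<beta> * trace q n x' + \<gamma> * x' ^ (q ^ s)"
        using e by simp
      then have "\<beta> * trace q n (x' - x) + \<gamma> * (x' - x)^(q^s) = 0"
      proof -
        have tr: "trace q n (x' - x) = trace q n x' - trace q n x"
          using F.tr_add[of x' "-x"] F.tr_neg[of x] by simp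
        show ?thesis unfolding tr F.diffj using \<open>\<beta> * trace q n x + \<gamma> * x ^ (q ^ s) = \<beta> * trace q n x' + \<gamma> * x' ^ (q ^ s)\<close>
          by (simp add: algebra_simps)
      qed
      then have "x' - x = 0" using h cQ by blast
      then show "x = x'" by simp
    qed
    then show "bij ?f" using fin by (simp add: bij_def finite_UNIV_inj_surj)
  qed
  define b where "b = \<beta> * inverse \<gamma>"
  have bQ': "b^Q = b" unfolding b_def using bQ gQ by (simp add: power_mult_distrib power_inverse)
  have "(\<forall>c::'a. c^Q = c \<and> \<beta> * trace q n c + \<gamma> * c^(q^s) = 0 \<longrightarrow> c = 0) \<longleftrightarrow> trace q n b + 1 \<noteq> 0"
  proof
    assume h: "\<forall>c::'a. c^Q = c \<and> \<beta> * trace q n c + \<gamma> * c^(q^s) = 0 \<longrightarrow> c = 0"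
    show "trace q n b + 1 \<noteq> 0"
    proof
      assume tb: "trace q n b + 1 = 0"
      define d where "d = (-b)^(q^(n*s - s))"
      have ds: "d^(q^s) = -b"
      proof -
        have "s \<le> n*s" using npos by simp
        then have "n*s - s + s = n*s" by simp
        then have "d^(q^s) = (-b)^(q^(n*s))" unfolding d_def F.powpow by simp
        also have "\<dots> = (-b)^((q^n)^s)" by (simp add: power_mult)
        also have "\<dots> = -b" by (induction s) (simp_all add: power_mult fid)
        finally show ?thesis .
      qed
      have dQ': "d^Q = d"
      proof -
        have "d^Q = ((-b)^Q)^(q^(n*s - s))" unfolding d_def
          by (simp add: power_mult[symmetric] mult.commute)
        also have "(-b)^Q = -b" unfolding Q_def using bQ' Q_def F.negj by simp
        finally show ?thesis unfolding d_def .
      qed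
      have tbm: "trace q n b = -1" using tb by (simp add: eq_neg_iff_add_eq_0)
      have "trace q n d = trace q n (-b)" using F.tr_frobj[of d s] ds by simp
      then have td: "trace q n d = 1" using F.tr_neg[of b] tbm by simp
      have "\<beta> * trace q n d + \<gamma> * d^(q^s) = 0"
        using td ds assms(7) unfolding b_def by (simp add: field_simps)
      then have "d = 0" using h dQ' by blast
      then show False using td unfolding trace_def using npos by (simp add: F.zeroj)
    qed
  next
    assume tb: "trace q n b + 1 \<noteq> 0"
    show "\<forall>c::'a. c^Q = c \<and> \<beta> * trace q n c + \<gamma> * c^(q^s) = 0 \<longrightarrow> c = 0"
    proof (intro allI impI)
      fix c :: 'a assume c: "c^Q = c \<and> \<beta> * trace q n c + \<gamma> * c^(q^s) = 0"
      define T where "T = trace q n c"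
      have cs: "c^(q^s) = - (T * b)"
        using c assms(7) unfolding T_def b_def by (simp add: field_simps eq_neg_iff_add_eq_0)
      have "T = trace q n (c^(q^s))" unfolding T_def F.tr_frobj ..
      also have "\<dots> = - (T * trace q n b)" unfolding cs F.tr_neg
        using F.tr_scal[OF F.tr_q[of c]] T_def by simp
      finally have "T * (trace q n b + 1) = 0" by (simp add: algebra_simps eq_neg_iff_add_eq_0)
      then have "T = 0" using tb by simp
      then have "c^(q^s) = 0" using cs by simp
      then show "c = 0" by simp
    qed
  qed
  then show ?thesis using crit unfolding b_def by simp
qed

end
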